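(* Let $X\subset\mathbb{R}^n$ be a finite set of points, let $\mathcal{O}\subset\mathcal{T}_n$ be an order ideal, and let $G\subset\mathbb{R}[x_1,\ldots,x_n]$ be an $\mathcal{O}$-border basis of the vanishing ideal $\mathcal{I}(X)=\{g\in\mathbb{R}[x_1,\ldots,x_n]: g(\mathbf{x})=0\ \forall \mathbf{x}\in X\}$. Then: (1) every $o\in\mathcal{O}\setminus\{1\}$ satisfies $\|o\|_{\mathrm{gw},X}\neq 0$; (2) every border term $b\in\partial\mathcal{O}$ satisfies $\|b\|_{\mathrm{gw},X}\neq 0$; (3) every $g\in G$ satisfies $\|g\|_{\mathrm{gw},X}\neq 0$.
   Context: $\mathcal{T}_n$ is the set of terms of $\mathbb{R}[x_1,\ldots,x_n]$. An order ideal is a finite $\mathcal{O}\subset\mathcal{T}_n$ closed under taking divisors; its border is $\partial\mathcal{O}=(\bigcup_k x_k\mathcal{O})\setminus\mathcal{O}$. An $\mathcal{O}$-border prebasis is a set of polynomials of the form $b-\sum_{o\in\mathcal{O}}c_o o$ with $b\in\partial\mathcal{O}$, $c_o\in\mathbb{R}$ (one for each $b$); it is an $\mathcal{O}$-border basis of an ideal $I$ if it lies in $I$ and $\mathcal{O}$ is a basis of the $\mathbb{R}$-vector space $\mathbb{R}[x_1,\ldots,x_n]/I$. For $X=\{\mathbf{x}_1,\ldots,\mathbf{x}_N\}$, the gradient norm of a polynomial $g$ is $\|g\|_{g,X}=\sqrt{\sum_{\mathbf{x}\in X}\|\nabla g(\mathbf{x})\|^2}/Z$ with $Z=\sqrt{\sum_{k=1}^n\deg_k(g)^2}$,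 and $\|g\|_{g,X}:=0$ if $g$ is constant. For $g=\sum_i c_it_i$ ($c_i\in\mathbb{R}$, distinct terms $t_i$), the gradient-weighted norm is $\|g\|_{\mathrm{gw},X}=\sqrt{\sum_i c_i^2\|t_i\|_{g,X}^2}$. *)

theory Defs
  imports "HOL-Analysis.Analysis" "HOL-Library.Poly_Mapping"
begin

(* Terms of R[x_0..x_{n-1}] are exponent vectors (nat =>0 nat) supported on {..<n};
   polynomials are finitely supported maps from terms to real coefficients;
   points of R^n are functions nat => real vanishing outside {..<n}. *)

type_synonym pterm = "nat \<Rightarrow>\<^sub>0 nat"
type_synonym rpoly = "pterm \<Rightarrow>\<^sub>0 real"

definition terms :: "nat \<Rightarrow> pterm set" where
  "terms n = {t. Poly_Mapping.keys t \<subseteq> {..<n}}"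

definition polys :: "nat \<Rightarrow> rpoly set" where
  "polys n = {p. Poly_Mapping.keys p \<subseteq> terms n}"

definition points :: "nat \<Rightarrow> (nat \<Rightarrow> real) set" where
  "points n = {x. \<forall>i\<ge>n. x i = 0}"

definition term_poly :: "pterm \<Rightarrow> rpoly" where
  "term_poly t = Poly_Mapping.single t 1"

definition eval_term :: "pterm \<Rightarrow> (nat \<Rightarrow> real) \<Rightarrow> real" where
  "eval_term t x = (\<Prod>i\<in>Poly_Mapping.keys t. x i ^ Poly_Mapping.lookup t i)"

definition eval_poly :: "rpoly \<Rightarrow> (nat \<Rightarrow> real) \<Rightarrow> real" where
  "eval_poly p x = (\<Sum>t\<in>Poly_Mapping.keys p. Poly_Mapping.lookup p t * eval_term t x)"

definition pderiv_at :: "rpoly \<Rightarrow> nat \<Rightarrow> (nat \<Rightarrow> real) \<Rightarrow> real" where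
  "pderiv_at p k x = deriv (\<lambda>s. eval_poly p (x(k := s))) (x k)"

definition deg_var :: "nat \<Rightarrow> rpoly \<Rightarrow> nat" where
  "deg_var k p = (if Poly_Mapping.keys p = {} then 0 else Max ((\<lambda>t. Poly_Mapping.lookup t k) ` Poly_Mapping.keys p))"

definition is_const :: "rpoly \<Rightarrow> bool" where
  "is_const p \<longleftrightarrow> Poly_Mapping.keys p \<subseteq> {0}"

definition grad_norm :: "nat \<Rightarrow> (nat \<Rightarrow> real) set \<Rightarrow> rpoly \<Rightarrow> real" where
  "grad_norm n X g =
     (if is_const g then 0
      else sqrt (\<Sum>x\<in>X. \<Sum>k<n. (pderiv_at g k x)\<^sup>2)
           / sqrt (\<Sum>k<n. (real (deg_var k g))\<^sup>2))"

definition gw_norm :: "nat \<Rightarrow> (nat \<Rightarrow> real) set \<Rightarrow> rpoly \<Rightarrow> real" where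
  "gw_norm n X g = sqrt (\<Sum>t\<in>Poly_Mapping.keys g. (Poly_Mapping.lookup g t)\<^sup>2 * (grad_norm n X (term_poly t))\<^sup>2)"

definition divides_term :: "pterm \<Rightarrow> pterm \<Rightarrow> bool" where
  "divides_term s t \<longleftrightarrow> (\<forall>i. Poly_Mapping.lookup s i \<le> Poly_Mapping.lookup t i)"

definition order_ideal :: "nat \<Rightarrow> pterm set \<Rightarrow> bool" where
  "order_ideal n OI \<longleftrightarrow> finite OI \<and> OI \<subseteq> terms n \<and>
     (\<forall>t\<in>OI. \<forall>s. divides_term s t \<longrightarrow> s \<in> OI)"

definition var_times :: "nat \<Rightarrow> pterm \<Rightarrow> pterm" where
  "var_times k t = t + Poly_Mapping.single k 1"

definition border :: "nat \<Rightarrow> pterm set \<Rightarrow> pterm set" where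
  "border n OI = (\<Union>k<n. var_times k ` OI) - OI"

definition vanishing_ideal :: "nat \<Rightarrow> (nat \<Rightarrow> real) set \<Rightarrow> rpoly set" where
  "vanishing_ideal n X = {g \<in> polys n. \<forall>x\<in>X. eval_poly g x = 0}"

definition border_prebasis :: "nat \<Rightarrow> pterm set \<Rightarrow> rpoly set \<Rightarrow> bool" where
  "border_prebasis n OI G \<longleftrightarrow>
     (\<exists>c :: pterm \<Rightarrow> pterm \<Rightarrow> real.
        G = (\<lambda>b. term_poly b - (\<Sum>u\<in>OI. Poly_Mapping.single u (c b u))) ` border n OI)"

(* OI is a basis of the R-vector space R[x]/I: residues of OI span and are independent *)
definition basis_mod :: "nat \<Rightarrow> pterm set \<Rightarrow> rpoly set \<Rightarrow> bool" where
  "basis_mod n OI I \<longleftrightarrow>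
     (\<forall>p\<in>polys n. \<exists>c. p - (\<Sum>u\<in>OI. Poly_Mapping.single u (c u)) \<in> I) \<and>
     (\<forall>c. (\<Sum>u\<in>OI. Poly_Mapping.single u (c u)) \<in> I \<longrightarrow> (\<forall>u\<in>OI. c u = 0))"

definition border_basis :: "nat \<Rightarrow> pterm set \<Rightarrow> rpoly set \<Rightarrow> rpoly set \<Rightarrow> bool" where
  "border_basis n OI G I \<longleftrightarrow> border_prebasis n OI G \<and> G \<subseteq> I \<and> basis_mod n OI I"

end

theory Submission
  imports Defs
begin

lemma eval_term_poly: "eval_poly (term_poly t) x = eval_term t x"
  by (simp add: eval_poly_def term_poly_def)

lemma deriv_term:
  assumes "Poly_Mapping.lookup t k > 0"
  shows "pderiv_at (term_poly t) k x = real (Poly_Mapping.lookup t k) * eval_term (t - Poly_Mapping.single k 1) x"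
proof -
  define m where "m = Poly_Mapping.lookup t k"
  define C where "C = (\<Prod>i\<in>Poly_Mapping.keys t - {k}. x i ^ Poly_Mapping.lookup t i)"
  have kin: "k \<in> Poly_Mapping.keys t" using assms by (simp add: Poly_Mapping.in_keys_iff)
  have eq: "eval_poly (term_poly t) (x(k := s)) = s ^ m * C" for s
    unfolding eval_term_poly eval_term_def C_def m_def
    by (simp add: prod.remove[OF finite_keys kin])
  have D: "((\<lambda>s. s ^ m * C) has_real_derivative (real m * x k ^ (m - 1)) * C) (at (x k))"
    by (intro DERIV_cmult_right) (use DERIV_pow[of m "x k" UNIV] in simp)
  have "pderiv_at (term_poly t) k x = real m * x k ^ (m - 1) * C"
    unfolding pderiv_at_def eq using DERIV_imp_deriv[OF D] by simp
  moreover have "eval_term (t - Poly_Mapping.single k 1) x = x k ^ (m - 1) * C"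
  proof -
    have sub: "Poly_Mapping.keys (t - Poly_Mapping.single k 1) \<subseteq> Poly_Mapping.keys t"
      by (auto simp: Poly_Mapping.in_keys_iff lookup_minus lookup_single when_def split: if_splits)
    have "eval_term (t - Poly_Mapping.single k 1) x
        = (\<Prod>i\<in>Poly_Mapping.keys t. x i ^ Poly_Mapping.lookup (t - Poly_Mapping.single k 1) i)"
      unfolding eval_term_def
      by (rule prod.mono_neutral_left[OF finite_keys sub]) (auto simp: Poly_Mapping.in_keys_iff)
    also have "\<dots> = x k ^ (m - 1) * C"
      unfolding C_def m_def
      by (simp add: prod.remove[OF finite_keys kin] lookup_minus lookup_single when_def)
    finally show ?thesis .
  qed
  ultimately show ?thesis by (simp add: m_def)
qed

lemma grad_nz:
  assumes X: "finite X" and bm: "basis_mod n OI (vanishing_ideal n X)"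
    and t: "t \<in> terms n" and k: "k < n" and tk: "Poly_Mapping.lookup t k > 0"
    and s: "t - Poly_Mapping.single k 1 \<in> OI" and OIt: "OI \<subseteq> terms n" and fin: "finite OI"
  shows "grad_norm n X (term_poly t) \<noteq> 0"
proof -
  define s' where "s' = t - Poly_Mapping.single k 1"
  have tnz: "t \<noteq> 0" using tk by (auto simp: lookup_zero)
  have nc: "\<not> is_const (term_poly t)" using tnz by (simp add: is_const_def term_poly_def)
  have H: "\<And>c. (\<Sum>u\<in>OI. Poly_Mapping.single u (c u)) \<in> vanishing_ideal n X \<Longrightarrow> \<forall>u\<in>OI. c u = (0::real)"
      using bm unfolding basis_mod_def by blast
  have "\<exists>x\<in>X. pderiv_at (term_poly t) k x \<noteq> 0"
  proof (rule ccontr)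
    assume "\<not> ?thesis"
    hence z: "\<forall>x\<in>X. eval_term s' x = 0" using tk by (simp add: deriv_term s'_def)
    have "(\<Sum>u\<in>OI. Poly_Mapping.single u (if u = s' then (1::real) else 0)) = Poly_Mapping.single s' 1"
    proof -
      have "(\<Sum>u\<in>OI. Poly_Mapping.single u (if u = s' then (1::real) else 0))
          = (\<Sum>u\<in>OI. if u = s' then Poly_Mapping.single u 1 else 0)"
        by (rule sum.cong) auto
      also have "\<dots> = Poly_Mapping.single s' 1"
        using s fin by (subst sum.delta) (auto simp only: s'_def if_True)
      finally show ?thesis .
    qed
    moreover have "Poly_Mapping.single s' (1::real) \<in> vanishing_ideal n X"
      using z s OIt unfolding vanishing_ideal_def polys_def s'_def
      by (auto simp: eval_term_poly[unfolded term_poly_def])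
    ultimately have "(\<Sum>u\<in>OI. Poly_Mapping.single u (if u = s' then (1::real) else 0)) \<in> vanishing_ideal n X"
      by simp
    then have "\<forall>u\<in>OI. (if u = s' then (1::real) else 0) = 0"
      by (rule H[of "\<lambda>u. if u = s' then (1::real) else 0"])
    with s show False by (auto simp: s'_def)
  qed
  then obtain x where x: "x \<in> X" "pderiv_at (term_poly t) k x \<noteq> 0" by blast
  have "(\<Sum>x\<in>X. \<Sum>k<n. (pderiv_at (term_poly t) k x)\<^sup>2) > 0"
  proof (rule sum_pos2[OF X x(1)])
    show "0 < (\<Sum>k<n. (pderiv_at (term_poly t) k x)\<^sup>2)"
      by (rule sum_pos2[of _ k]) (use k x in auto)
  qed (auto intro: sum_nonneg)
  moreover have "deg_var j (term_poly t) = Poly_Mapping.lookup t j" for j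
    by (simp add: deg_var_def term_poly_def)
  moreover have "(\<Sum>j<n. (real (Poly_Mapping.lookup t j))\<^sup>2) > 0"
    by (rule sum_pos2[of _ k]) (use k tk in auto)
  ultimately show ?thesis using nc by (simp add: grad_norm_def)
qed

lemma gw_term: "gw_norm n X (term_poly t) = \<bar>grad_norm n X (term_poly t)\<bar>"
  by (simp add: gw_norm_def term_poly_def)

theorem mainTheorem2:
  fixes n :: nat and X :: "(nat \<Rightarrow> real) set" and OI :: "pterm set" and G :: "rpoly set"
  assumes "finite X" and "X \<subseteq> points n"
    and "order_ideal n OI"
    and "border_basis n OI G (vanishing_ideal n X)"
  shows "(\<forall>u\<in>OI - {0}. gw_norm n X (term_poly u) \<noteq> 0)
       \<and> (\<forall>b\<in>border n OI. gw_norm n X (term_poly b) \<noteq> 0)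
       \<and> (\<forall>g\<in>G. gw_norm n X g \<noteq> 0)"
proof -
  have bm: "basis_mod n OI (vanishing_ideal n X)" using assms(4) by (simp add: border_basis_def)
  have fin: "finite OI" using assms(3) by (simp add: order_ideal_def)
  have OIt: "OI \<subseteq> terms n" and cl: "\<And>t s. t \<in> OI \<Longrightarrow> divides_term s t \<Longrightarrow> s \<in> OI"
    using assms(3) by (auto simp: order_ideal_def)
  obtain c where G: "G = (\<lambda>b. term_poly b - (\<Sum>u\<in>OI. Poly_Mapping.single u (c b u))) ` border n OI"
    using assms(4) by (auto simp: border_basis_def border_prebasis_def)
  have P1: "gw_norm n X (term_poly u) \<noteq> 0" if u: "u \<in> OI" "u \<noteq> 0" for u
  proof -
    obtain k where kk: "k \<in> Poly_Mapping.keys u" using u(2) by (metis Poly_Mapping.keys_eq_empty ex_in_conv)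
    have k: "k < n" using kk u OIt by (auto simp: terms_def)
    have tk: "Poly_Mapping.lookup u k > 0" using kk by (simp add: Poly_Mapping.in_keys_iff)
    have "divides_term (u - Poly_Mapping.single k 1) u"
      by (simp add: divides_term_def lookup_minus)
    hence "u - Poly_Mapping.single k 1 \<in> OI" using cl u by blast
    then show ?thesis using grad_nz[OF assms(1) bm _ k tk _ OIt fin] u OIt by (auto simp: gw_term)
  qed
  have P2: "gw_norm n X (term_poly b) \<noteq> 0" if b: "b \<in> border n OI" for b
  proof -
    obtain k u where k: "k < n" and u: "u \<in> OI" and bu: "b = u + Poly_Mapping.single k 1"
      using b by (auto simp: border_def var_times_def)
    have tk: "Poly_Mapping.lookup b k > 0" using bu by (simp add: lookup_add)
    have uk0: "Poly_Mapping.keys u \<subseteq> {..<n}" using u OIt by (auto simp: terms_def)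
    have uk: "\<forall>x. 0 < Poly_Mapping.lookup u x \<longrightarrow> x < n"
    proof (intro allI impI)
      fix x assume "0 < Poly_Mapping.lookup u x"
      hence "x \<in> Poly_Mapping.keys u" by (simp add: Poly_Mapping.in_keys_iff)
      thus "x < n" using uk0 by auto
    qed
    have bt: "b \<in> terms n" using uk k bu
      by (auto simp: terms_def Poly_Mapping.in_keys_iff lookup_add lookup_single when_def split: if_splits)
    have "b - Poly_Mapping.single k 1 = u" using bu by simp
    then show ?thesis using grad_nz[OF assms(1) bm bt k tk _ OIt fin] u by (auto simp: gw_term)
  qed
  have P3: "gw_norm n X g \<noteq> 0" if g: "g \<in> G" for g
  proof -
    obtain b where b: "b \<in> border n OI" and gb: "g = term_poly b - (\<Sum>u\<in>OI. Poly_Mapping.single u (c b u))"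
      using g G by auto
    have bn: "b \<notin> OI" using b by (simp add: border_def)
    have "Poly_Mapping.lookup g b = 1 - (\<Sum>u\<in>OI. Poly_Mapping.lookup (Poly_Mapping.single u (c b u)) b)"
      by (simp add: gb lookup_minus lookup_sum term_poly_def)
    also have "(\<Sum>u\<in>OI. Poly_Mapping.lookup (Poly_Mapping.single u (c b u)) b) = 0"
      using bn by (intro sum.neutral) (auto simp: lookup_single when_def)
    finally have gb1: "Poly_Mapping.lookup g b = 1" by simp
    hence bk: "b \<in> Poly_Mapping.keys g" by (simp add: Poly_Mapping.in_keys_iff)
    have "0 < (\<Sum>t\<in>Poly_Mapping.keys g. (Poly_Mapping.lookup g t)\<^sup>2 * (grad_norm n X (term_poly t))\<^sup>2)"
    proof (rule sum_pos2[OF finite_keys bk])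
      show "0 < (Poly_Mapping.lookup g b)\<^sup>2 * (grad_norm n X (term_poly b))\<^sup>2"
        using P2[OF b] gb1 by (simp add: gw_term)
    qed auto
    then show ?thesis by (simp add: gw_norm_def)
  qed
  show ?thesis
  proof (intro conjI ballI)
    fix u assume "u \<in> OI - {0}"
    then show "gw_norm n X (term_poly u) \<noteq> 0" by (intro P1) auto
  next
    fix b assume "b \<in> border n OI"
    then show "gw_norm n X (term_poly b) \<noteq> 0" by (rule P2)
  next
    fix g assume "g \<in> G"
    then show "gw_norm n X g \<noteq> 0" by (rule P3)
  qed
qed

end
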